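(* Let $n$ be a positive integer, $1\le k\le n$, and $w\in\mathfrak S_n$. For any $X\in\binom{[n]}{k+1}$, the intersection $P(X)\cap\mathrm{Inv}_k(w)$ is one of the following: $\emptyset$; $\{X_i\}$ for some $i\in[k+1]$; $\{X_i,X_{i+1}\}$ for some $i\in[k]$; or the entire packet $P(X)$.
   Context: $\mathfrak S_n$ is the symmetric group on $[n]=\{1,\dots,n\}$. $\binom{[n]}{m}$ is the set of $m$-element subsets of $[n]$, each written $[x_1,\dots,x_m]$ with $x_1<\dots<x_m$. For $X=[x_1,\dots,x_m]$ and $i\in[m]$, $X_i$ is $X$ with $x_i$ removed, and $P(X)=\{X_1,\dots,X_m\}$. $\mathrm{Inv}_m(w)=\{[x_1,\dots,x_m]\in\binom{[n]}{m}: w^{-1}(x_1)>\dots>w^{-1}(x_m)\}$. *)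

theory Defs
  imports "HOL-Combinatorics.Permutations"
begin

definition subsets :: "nat \<Rightarrow> nat \<Rightarrow> nat set set" where
  "subsets n m = {X. X \<subseteq> {1..n} \<and> card X = m}"

definition elt :: "nat set \<Rightarrow> nat \<Rightarrow> nat" where
  "elt X i = sorted_list_of_set X ! (i - 1)"

definition del :: "nat set \<Rightarrow> nat \<Rightarrow> nat set" where
  "del X i = X - {elt X i}"

definition packet :: "nat set \<Rightarrow> nat set set" where
  "packet X = {del X i | i. 1 \<le> i \<and> i \<le> card X}"

definition Inv :: "nat \<Rightarrow> nat \<Rightarrow> (nat \<Rightarrow> nat) \<Rightarrow> nat set set" where
  "Inv n m w = {X \<in> subsets n m.
     \<forall>i. 1 \<le> i \<and> i < m \<longrightarrow> inv w (elt X i) > inv w (elt X (i + 1))}"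

end

theory Submission imports Defs begin
lemma remove_nth:
  assumes "distinct xs" "p < length xs"
  shows "remove1 (xs!p) xs = take p xs @ drop (Suc p) xs"
proof -
  have "xs = take p xs @ xs!p # drop (Suc p) xs" using id_take_nth_drop assms by blast
  moreover have "xs!p \<notin> set (take p xs)" using assms
    by (auto simp: in_set_conv_nth nth_eq_iff_index_eq)
  ultimately show ?thesis using remove1_split[of "xs!p" xs] assms
    by (metis nth_mem)
qed

lemma elt_del:
  assumes "finite X" "1 \<le> i" "i \<le> card X" "1 \<le> j" "j < card X"
  shows "elt (del X i) j = (if j < i then elt X j else elt X (j+1))"
proof -
  let ?xs = "sorted_list_of_set X"
  have L: "length ?xs = card X" by simp
  have "sorted_list_of_set (del X i) = remove1 (?xs ! (i-1)) ?xs"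
    unfolding del_def elt_def using assms(1) by (simp add: sorted_list_of_set_remove)
  also have "\<dots> = take (i-1) ?xs @ drop i ?xs"
    using remove_nth[of ?xs "i-1"] assms by simp
  finally have E: "sorted_list_of_set (del X i) = take (i-1) ?xs @ drop i ?xs" .
  show ?thesis unfolding elt_def E using assms
    by (auto simp: nth_append min_def)
qed

lemma dec_chain:
  fixes s :: "nat \<Rightarrow> nat"
  assumes "\<forall>j. 1 \<le> j \<and> j \<le> k \<longrightarrow> s j > s (j+1)" "1 \<le> a" "a < b" "b \<le> k + 1"
  shows "s a > s b"
  using assms(3,4)
proof (induction b rule: less_induct)
  case (less b)
  show ?case
  proof (cases "b = a + 1")
    case True then show ?thesis using assms(1,2) less.prems by auto
  next
    case False
    then have "a < b - 1" "b - 1 < b" using less.prems by auto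
    then have "s a > s (b - 1)" using less.IH less.prems by auto
    moreover have "1 \<le> b - 1 \<and> b - 1 \<le> k" using assms(2) less.prems \<open>a < b - 1\<close> by linarith
    then have "s (b-1) > s (b - 1 + 1)" using assms(1) by blast
    moreover have "b - 1 + 1 = b" using \<open>a < b - 1\<close> by linarith
    ultimately show ?thesis by (metis less_trans)
  qed
qed

theorem lemma3p2:
  fixes n k :: nat and w :: "nat \<Rightarrow> nat" and X :: "nat set"
  assumes "0 < n" and "1 \<le> k" and "k \<le> n"
    and "w permutes {1..n}"
    and "X \<in> subsets n (k + 1)"
  shows "packet X \<inter> Inv n k w = {}
    \<or> (\<exists>i. 1 \<le> i \<and> i \<le> k + 1 \<and> packet X \<inter> Inv n k w = {del X i})
    \<or> (\<exists>i. 1 \<le> i \<and> i \<le> k \<and> packet X \<inter> Inv n k w = {del X i, del X (i + 1)})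
    \<or> packet X \<inter> Inv n k w = packet X"
proof -
  have Xs: "X \<subseteq> {1..n}" and cX: "card X = k + 1" using assms(5) by (auto simp: subsets_def)
  have fX: "finite X" using Xs finite_subset by blast
  define s where "s j = inv w (elt X j)" for j
  have sub: "del X i \<in> subsets n k" if "1 \<le> i" "i \<le> k + 1" for i
  proof -
    have "i - 1 < length (sorted_list_of_set X)" using that cX by simp
    then have "elt X i \<in> X" unfolding elt_def using fX
      by (metis nth_mem set_sorted_list_of_set)
    then show ?thesis using Xs cX fX unfolding subsets_def del_def by auto
  qed
  have good: "del X i \<in> Inv n k w \<longleftrightarrow>
     (\<forall>j. 1 \<le> j \<and> j < k \<longrightarrow> inv w (elt (del X i) j) > inv w (elt (del X i) (j + 1)))"
    if "1 \<le> i" "i \<le> k + 1" for i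
    using sub[OF that] unfolding Inv_def by auto
  have eltd: "elt (del X i) j = (if j < i then elt X j else elt X (j+1))"
    if "1 \<le> i" "i \<le> k + 1" "1 \<le> j" "j < k + 1" for i j
    using elt_del[OF fX, of i j] that cX by simp
  define D where "D = {i. 1 \<le> i \<and> i \<le> k + 1 \<and> del X i \<in> Inv n k w}"
  have PD: "packet X \<inter> Inv n k w = del X ` D"
    unfolding packet_def D_def cX by auto
  show ?thesis
  proof (cases "\<forall>j. 1 \<le> j \<and> j \<le> k \<longrightarrow> s j > s (j+1)")
    case True
    have "D = {1..k+1}"
    proof -
      have "i \<in> D" if "1 \<le> i" "i \<le> k + 1" for i
      proof -
        have "inv w (elt (del X i) j) > inv w (elt (del X i) (j + 1))" if "1 \<le> j" "j < k" for j
        proof -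
          have "s (if j < i then j else j+1) > s (if j + 1 < i then j+1 else j+2)"
            by (rule dec_chain[OF True]) (use that \<open>1 \<le> i\<close> \<open>i \<le> k+1\<close> in auto)
          then show ?thesis using eltd[OF \<open>1 \<le> i\<close> \<open>i \<le> k+1\<close>, of j] eltd[OF \<open>1 \<le> i\<close> \<open>i \<le> k+1\<close>, of "j+1"] that
            unfolding s_def by (auto split: if_splits)
        qed
        then show ?thesis unfolding D_def using good[OF that] that by auto
      qed
      then show ?thesis unfolding D_def by auto
    qed
    moreover have "packet X = del X ` {1..k+1}" unfolding packet_def cX by auto
    ultimately have "packet X \<inter> Inv n k w = packet X" unfolding PD by simp
    then show ?thesis by blast
  next
    case False
    then obtain j0 where j0: "1 \<le> j0" "j0 \<le> k" "\<not> s j0 > s (j0+1)" by auto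
    have DS: "D \<subseteq> {j0, j0+1}"
    proof
      fix i assume "i \<in> D"
      then have i: "1 \<le> i" "i \<le> k + 1" and G: "\<forall>j. 1 \<le> j \<and> j < k \<longrightarrow> inv w (elt (del X i) j) > inv w (elt (del X i) (j + 1))"
        unfolding D_def using good by auto
      show "i \<in> {j0, j0+1}"
      proof (rule ccontr)
        assume "i \<notin> {j0, j0+1}"
        then consider "j0 + 1 < i" | "i < j0" by fastforce
        then show False
        proof cases
          case 1
          then have "inv w (elt (del X i) j0) > inv w (elt (del X i) (j0 + 1))" using G j0 i by auto
          then show False using eltd[OF i, of j0] eltd[OF i, of "j0+1"] 1 j0 i unfolding s_def by auto
        next
          case 2
          have h1: "1 \<le> j0 - 1" "j0 - 1 < k" "\<not> (j0 - 1 < i)" "j0 - 1 + 1 = j0" "j0 - 1 < k + 1" using 2 i j0 by linarith+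
          have "inv w (elt (del X i) (j0-1)) > inv w (elt (del X i) (j0 - 1 + 1))" using G h1(1,2) by blast
          then have A: "inv w (elt (del X i) (j0-1)) > inv w (elt (del X i) j0)" by (simp only: h1(4))
          have B: "elt (del X i) (j0-1) = elt X j0" using eltd[OF i h1(1) h1(5)] h1(3,4) by simp
          have C: "elt (del X i) j0 = elt X (j0+1)" using eltd[OF i, of "j0"] 2 j0 by simp
          show False using A B C j0(3) unfolding s_def by simp
        qed
      qed
    qed
    then have "D = {} \<or> D = {j0} \<or> D = {j0+1} \<or> D = {j0, j0+1}" by blast
    moreover have "j0 + 1 \<le> k + 1" using j0 by simp
    ultimately consider "D = {}" | "D = {j0}" | "D = {j0+1}" | "D = {j0, j0+1}" by blast
    then show ?thesis
    proof cases
      case 1 then show ?thesis unfolding PD by simp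
    next
      case 2
      then have "packet X \<inter> Inv n k w = {del X j0}" unfolding PD by simp
      then show ?thesis using j0(1,2) by (meson le_add1 le_trans)
    next
      case 3
      then have "packet X \<inter> Inv n k w = {del X (j0+1)}" unfolding PD by simp
      moreover have "1 \<le> j0 + 1" "j0 + 1 \<le> k + 1" using j0 by simp_all
      ultimately show ?thesis by blast
    next
      case 4
      then have "packet X \<inter> Inv n k w = {del X j0, del X (j0+1)}" unfolding PD by simp
      then show ?thesis using j0(1,2) by blast
    qed
  qed
qed
end
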